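(* Let $\rho>0$ be fixed. The class of $\rho$-dense graphs in $\mathbb{R}^d$ has polynomial expansion bounded by $f(r)=\rho\, r^{O(d)}$.
   Context: A set of objects $F$ in $\mathbb{R}^d$ has density $\rho$ if any object $o$ (not necessarily in $F$) intersects at most $\rho$ objects of $F$ with diameter at least that of $o$. A graph is $\rho$-dense (in $\mathbb{R}^d$) if it is the intersection graph of a set of objects in $\mathbb{R}^d$ with density $\rho$. A graph is $r$-shallow if some vertex reaches every vertex by a path with at most $r$ edges; an $r$-shallow minor of $G$ is a minor (edge contractions, edge/vertex deletions) whose clusters induce $r$-shallow subgraphs; $\nabla_r(G)$ is the supremum of $|E(K)|/|V(K)|$ over all $r$-shallow minors $K$ of $G$. A class has expansion bounded by $f$ if $\sup_{G}\nabla_r(G)\le f(r)$ for all $r$. *)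

theory Defs
  imports "HOL-Analysis.Analysis"
begin

definition Rd :: "nat \<Rightarrow> (nat \<Rightarrow> real) set" where
  "Rd d = {x. \<forall>i\<ge>d. x i = 0}"

definition edist :: "nat \<Rightarrow> (nat \<Rightarrow> real) \<Rightarrow> (nat \<Rightarrow> real) \<Rightarrow> real" where
  "edist d x y = L2_set (\<lambda>i. x i - y i) {..<d}"

definition bounded_in :: "nat \<Rightarrow> (nat \<Rightarrow> real) set \<Rightarrow> bool" where
  "bounded_in d S \<longleftrightarrow> S \<subseteq> Rd d \<and> (\<exists>B. \<forall>x\<in>S. \<forall>y\<in>S. edist d x y \<le> B)"

definition diam :: "nat \<Rightarrow> (nat \<Rightarrow> real) set \<Rightarrow> real" where
  "diam d S = (if S = {} then 0 else Sup {edist d x y | x y. x \<in> S \<and> y \<in> S})"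

definition has_density :: "nat \<Rightarrow> real \<Rightarrow> 'v set \<Rightarrow> ('v \<Rightarrow> (nat \<Rightarrow> real) set) \<Rightarrow> bool" where
  "has_density d \<rho> V obj \<longleftrightarrow>
     (\<forall>v\<in>V. bounded_in d (obj v)) \<and>
     (\<forall>Q. bounded_in d Q \<longrightarrow>
        real (card {v\<in>V. obj v \<inter> Q \<noteq> {} \<and> diam d (obj v) \<ge> diam d Q}) \<le> \<rho>)"

definition inter_graph :: "('v \<Rightarrow> (nat \<Rightarrow> real) set) \<Rightarrow> 'v \<Rightarrow> 'v \<Rightarrow> bool" where
  "inter_graph obj u v \<longleftrightarrow> u \<noteq> v \<and> obj u \<inter> obj v \<noteq> {}"

definition path_in :: "('v \<Rightarrow> 'v \<Rightarrow> bool) \<Rightarrow> 'v set \<Rightarrow> 'v list \<Rightarrow> bool" where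
  "path_in E X xs \<longleftrightarrow> xs \<noteq> [] \<and> distinct xs \<and> set xs \<subseteq> X \<and>
     (\<forall>i. Suc i < length xs \<longrightarrow> E (xs ! i) (xs ! Suc i))"

definition shallow :: "nat \<Rightarrow> ('v \<Rightarrow> 'v \<Rightarrow> bool) \<Rightarrow> 'v set \<Rightarrow> bool" where
  "shallow r E X \<longleftrightarrow> (\<exists>c\<in>X. \<forall>v\<in>X. \<exists>xs. path_in E X xs \<and> hd xs = c \<and> last xs = v
                                       \<and> length xs \<le> Suc r)"

text \<open>An r-shallow minor of the graph (V,E): its vertices are pairwise disjoint clusters
  P (subsets of V each inducing an r-shallow subgraph), and its edge set M consists of
  unordered pairs of distinct clusters joined by at least one edge of the graph
  (any subset of those, accounting for edge deletions).\<close>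
definition shallow_minor :: "nat \<Rightarrow> 'v set \<Rightarrow> ('v \<Rightarrow> 'v \<Rightarrow> bool) \<Rightarrow> 'v set set \<Rightarrow> 'v set set set \<Rightarrow> bool" where
  "shallow_minor r V E P M \<longleftrightarrow>
     (\<forall>X\<in>P. X \<subseteq> V \<and> shallow r E X) \<and>
     (\<forall>X\<in>P. \<forall>Y\<in>P. X \<noteq> Y \<longrightarrow> X \<inter> Y = {}) \<and>
     (\<forall>e\<in>M. \<exists>X\<in>P. \<exists>Y\<in>P. X \<noteq> Y \<and> e = {X, Y} \<and> (\<exists>u\<in>X. \<exists>w\<in>Y. E u w))"

end

theory Submission
  imports Defs
begin


lemma edist_nonneg: "0 \<le> edist d x y" by (simp add: edist_def)
lemma edist_sym: "edist d x y = edist d y x"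
  unfolding edist_def L2_set_def by (simp add: power2_commute)
lemma edist_self: "edist d x x = 0"
  unfolding edist_def by (simp add: L2_set_0')
lemma edist_tri: "edist d x z \<le> edist d x y + edist d y z"
proof -
  have "edist d x z = L2_set (\<lambda>i. (x i - y i) + (y i - z i)) {..<d}"
    unfolding edist_def by (rule L2_set_cong) auto
  also have "\<dots> \<le> edist d x y + edist d y z"
    unfolding edist_def by (rule L2_set_triangle_ineq)
  finally show ?thesis .
qed

lemma edist_coord: "i < d \<Longrightarrow> \<bar>x i - y i\<bar> \<le> edist d x y"
proof -
  assume "i < d"
  have "\<bar>x i - y i\<bar> \<le> L2_set (\<lambda>i. \<bar>x i - y i\<bar>) {..<d}"
    using member_le_L2_set[of "{..<d}" i "\<lambda>i. \<bar>x i - y i\<bar>"] \<open>i<d\<close> by simp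
  moreover have "L2_set (\<lambda>i. \<bar>x i - y i\<bar>) {..<d} = edist d x y" unfolding edist_def L2_set_def by simp
  ultimately show ?thesis by simp
qed

lemma edist_l1: "(\<Sum>i<d. \<bar>x i - y i\<bar>) \<le> sqrt (real d) * edist d x y"
proof -
  have "(\<Sum>i<d. \<bar>x i - y i\<bar> * \<bar>1\<bar>) \<le> L2_set (\<lambda>i. x i - y i) {..<d} * L2_set (\<lambda>i. 1) {..<d}"
    by (rule L2_set_mult_ineq)
  thus ?thesis by (simp add: edist_def L2_set_constant mult.commute)
qed

lemma edist_zero: "x \<in> Rd d \<Longrightarrow> y \<in> Rd d \<Longrightarrow> edist d x y = 0 \<Longrightarrow> x = y"
proof
  fix i assume x: "x \<in> Rd d" and y: "y \<in> Rd d" and e: "edist d x y = 0"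
  show "x i = y i"
  proof (cases "i < d")
    case True thus ?thesis using e edist_coord[of i d x y] by simp
  next
    case False thus ?thesis using x y by (simp add: Rd_def)
  qed
qed

lemma diam_ge: assumes "bounded_in d S" "x \<in> S" "y \<in> S" shows "edist d x y \<le> diam d S"
proof -
  obtain B where B: "\<forall>x\<in>S. \<forall>y\<in>S. edist d x y \<le> B" using assms(1) by (auto simp: bounded_in_def)
  have "bdd_above {edist d x y | x y. x \<in> S \<and> y \<in> S}"
    using B by (auto intro!: bdd_aboveI[of _ B])
  thus ?thesis using assms by (auto simp: diam_def intro!: cSup_upper)
qed

lemma diam_le: assumes "\<And>x y. x \<in> S \<Longrightarrow> y \<in> S \<Longrightarrow> edist d x y \<le> B" "0 \<le> B"
  shows "diam d S \<le> B"
proof (cases "S = {}")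
  case True thus ?thesis using assms by (simp add: diam_def)
next
  case False
  then have ne: "{edist d x y | x y. x \<in> S \<and> y \<in> S} \<noteq> {}" by auto
  have "Sup {edist d x y | x y. x \<in> S \<and> y \<in> S} \<le> B"
    by (rule cSup_least[OF ne]) (use assms in auto)
  thus ?thesis using False by (simp add: diam_def)
qed

lemma diam_nonneg: "bounded_in d S \<Longrightarrow> 0 \<le> diam d S"
proof (cases "S = {}")
  case True thus ?thesis by (simp add: diam_def)
next
  case False then obtain x where "x \<in> S" by auto
  assume "bounded_in d S"
  then have "edist d x x \<le> diam d S" using diam_ge \<open>x\<in>S\<close> by blast
  thus ?thesis by (simp add: edist_self)
qed



definition walk :: "('v \<Rightarrow> (nat\<Rightarrow>real) set) \<Rightarrow> (nat \<Rightarrow> 'v) \<Rightarrow> nat \<Rightarrow> bool" where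
  "walk obj f k \<longleftrightarrow> (\<forall>i<k. obj (f i) \<inter> obj (f (Suc i)) \<noteq> {})"

lemma walk_small:
  assumes "walk obj f k" "\<forall>i\<le>k. bounded_in d (obj (f i)) \<and> diam d (obj (f i)) \<le> D"
    "p \<in> obj (f 0)" "q \<in> obj (f k)"
  shows "edist d p q \<le> (real k + 1) * D"
  using assms
proof (induction k arbitrary: f p)
  case 0
  then show ?case using diam_ge[of d "obj (f 0)" p q] by auto
next
  case (Suc k)
  obtain b where b: "b \<in> obj (f 0)" "b \<in> obj (f 1)" using Suc.prems(1) unfolding walk_def by fastforce
  have w: "walk obj (\<lambda>i. f (Suc i)) k" using Suc.prems(1) unfolding walk_def by auto
  have IH: "edist d b q \<le> (real k + 1) * D"
    using Suc.IH[OF w, of b] Suc.prems b by auto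
  have "edist d p b \<le> D" using diam_ge[of d "obj (f 0)" p b] Suc.prems b by force
  then show ?case using edist_tri[of d p q b] IH by (simp add: algebra_simps)
qed

lemma walk_big:
  assumes "walk obj f k" "\<forall>i\<le>k. bounded_in d (obj (f i))" "\<delta> \<le> diam d (obj (f k))"
    "p \<in> obj (f 0)"
  shows "\<exists>j\<le>k. \<delta> \<le> diam d (obj (f j)) \<and> (\<exists>q\<in>obj (f j). edist d p q \<le> real j * \<delta>)"
  using assms
proof (induction k arbitrary: f p)
  case 0
  then show ?case by (auto intro!: bexI[of _ p] simp: edist_self)
next
  case (Suc k)
  show ?case
  proof (cases "\<delta> \<le> diam d (obj (f 0))")
    case True then show ?thesis using Suc.prems by (auto intro!: exI[of _ 0] bexI[of _ p] simp: edist_self)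
  next
    case False
    obtain b where b: "b \<in> obj (f 0)" "b \<in> obj (f 1)" using Suc.prems(1) unfolding walk_def by fastforce
    have w: "walk obj (\<lambda>i. f (Suc i)) k" using Suc.prems(1) unfolding walk_def by auto
    obtain j q where jq: "j \<le> k" "\<delta> \<le> diam d (obj (f (Suc j)))" "q \<in> obj (f (Suc j))"
       "edist d b q \<le> real j * \<delta>"
      using Suc.IH[OF w, of b] Suc.prems b by auto
    have "edist d p b \<le> diam d (obj (f 0))" using diam_ge[of d "obj (f 0)" p b] Suc.prems b by force
    then have "edist d p q \<le> real (Suc j) * \<delta>" using edist_tri[of d p q b] jq False by (simp add: algebra_simps)
    then show ?thesis using jq by (intro exI[of _ "Suc j"]) auto
  qed
qed

lemma shallow_walk:
  assumes "shallow r (inter_graph obj) X"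
  shows "\<exists>c\<in>X. \<forall>v\<in>X. \<exists>f k. k \<le> r \<and> walk obj f k \<and> f 0 = c \<and> f k = v \<and> (\<forall>i\<le>k. f i \<in> X)"
proof -
  obtain c where c: "c \<in> X" "\<forall>v\<in>X. \<exists>xs. path_in (inter_graph obj) X xs \<and> hd xs = c \<and> last xs = v
                                       \<and> length xs \<le> Suc r"
    using assms unfolding shallow_def by blast
  have "\<forall>v\<in>X. \<exists>f k. k \<le> r \<and> walk obj f k \<and> f 0 = c \<and> f k = v \<and> (\<forall>i\<le>k. f i \<in> X)"
  proof
    fix v assume "v \<in> X"
    then obtain xs where xs: "path_in (inter_graph obj) X xs" "hd xs = c" "last xs = v" "length xs \<le> Suc r"
      using c by blast
    have ne: "xs \<noteq> []" using xs(1) by (simp add: path_in_def)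
    show "\<exists>f k. k \<le> r \<and> walk obj f k \<and> f 0 = c \<and> f k = v \<and> (\<forall>i\<le>k. f i \<in> X)"
    proof (intro exI conjI)
      show "length xs - 1 \<le> r" using xs(4) by simp
      have E: "\<forall>i. Suc i < length xs \<longrightarrow> inter_graph obj (xs ! i) (xs ! Suc i)"
        using xs(1) unfolding path_in_def by blast
      show "walk obj ((!) xs) (length xs - 1)" unfolding walk_def
      proof (intro allI impI)
        fix i assume "i < length xs - 1"
        then have "Suc i < length xs" by simp
        then show "obj (xs ! i) \<inter> obj (xs ! Suc i) \<noteq> {}" using E unfolding inter_graph_def by blast
      qed
      show "xs ! 0 = c" using xs(2) ne by (simp add: hd_conv_nth)
      show "xs ! (length xs - 1) = v" using xs(3) ne by (simp add: last_conv_nth)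
      have "set xs \<subseteq> X" using xs(1) unfolding path_in_def by blast
      moreover have "\<forall>i\<le>length xs - 1. i < length xs" using ne by (cases xs) auto
      ultimately show "\<forall>i\<le>length xs - 1. xs ! i \<in> X" by (meson nth_mem subsetD)
    qed
  qed
  then show ?thesis using c(1) by blast
qed



lemma sym_sum_le:
  fixes x :: real assumes "0 \<le> x"
  shows "(\<Sum>k\<in>{-int M..int M}. x ^ nat \<bar>k\<bar>) \<le> 2 * (\<Sum>n<Suc M. x ^ n)"
proof (induction M)
  case 0 then show ?case by simp
next
  case (Suc M)
  have eq: "{-int (Suc M)..int (Suc M)} = insert (int (Suc M)) (insert (- int (Suc M)) {-int M..int M})"
    by auto
  have n: "nat (1 + int M) = Suc M" "nat (int M + 1) = Suc M" by auto
  have "(\<Sum>k\<in>{-int (Suc M)..int (Suc M)}. x ^ nat \<bar>k\<bar>)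
     = x ^ Suc M + (x ^ Suc M + (\<Sum>k\<in>{-int M..int M}. x ^ nat \<bar>k\<bar>))"
    unfolding eq by (subst sum.insert; simp add: n)+
  also have "\<dots> \<le> 2 * (\<Sum>n<Suc (Suc M). x ^ n)" using Suc.IH by simp
  finally show ?case .
qed

lemma geom_le: fixes x :: real assumes "0 \<le> x" "x < 1"
  shows "(\<Sum>n<N. x ^ n) \<le> 1 / (1 - x)"
proof -
  have "(\<Sum>n<N. x ^ n) = (1 - x ^ N) / (1 - x)" using assms by (simp add: sum_gp_strict)
  also have "\<dots> \<le> 1 / (1 - x)" using assms by (intro divide_right_mono) auto
  finally show ?thesis .
qed

lemma lattice_count:
  fixes t d :: nat assumes t: "t \<ge> 1"
  shows "real (card {u \<in> PiE {..<d} (\<lambda>_. {-int (d*t)..int (d*t)}). (\<Sum>i<d. \<bar>u i\<bar>) \<le> int (d*t)})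
         \<le> (6 * real t + 6) ^ d"
proof -
  define x :: real where "x = real t / (real t + 1)"
  have x0: "0 < x" and x1: "x < 1" using t by (auto simp: x_def)
  define B where "B = PiE {..<d} (\<lambda>_. {-int (d*t)..int (d*t)})"
  define S where "S = {u \<in> B. (\<Sum>i<d. \<bar>u i\<bar>) \<le> int (d*t)}"
  have finB: "finite B" unfolding B_def by (intro finite_PiE) auto
  have SB: "S \<subseteq> B" unfolding S_def by auto
  have w: "x ^ (d*t) \<le> (\<Prod>i<d. x ^ nat \<bar>u i\<bar>)" if "u \<in> S" for u
  proof -
    have "(\<Prod>i<d. x ^ nat \<bar>u i\<bar>) = x ^ (\<Sum>i<d. nat \<bar>u i\<bar>)" by (simp add: power_sum)
    moreover have "int (\<Sum>i<d. nat \<bar>u i\<bar>) = (\<Sum>i<d. \<bar>u i\<bar>)" by simp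
    then have "int (\<Sum>i<d. nat \<bar>u i\<bar>) \<le> int (d * t)" using that unfolding S_def by simp
    then have "(\<Sum>i<d. nat \<bar>u i\<bar>) \<le> d * t" by linarith
    ultimately show ?thesis using x0 x1 by (simp add: power_decreasing)
  qed
  have "real (card S) * x ^ (d*t) = (\<Sum>u\<in>S. x ^ (d*t))" by simp
  also have "\<dots> \<le> (\<Sum>u\<in>S. \<Prod>i<d. x ^ nat \<bar>u i\<bar>)" using w by (intro sum_mono) auto
  also have "\<dots> \<le> (\<Sum>u\<in>B. \<Prod>i<d. x ^ nat \<bar>u i\<bar>)"
    using SB finB x0 by (intro sum_mono2) (auto intro!: prod_nonneg)
  also have "\<dots> = (\<Prod>i<d. \<Sum>k\<in>{-int (d*t)..int (d*t)}. x ^ nat \<bar>k\<bar>)"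
    unfolding B_def by (rule prod_sum_PiE[symmetric]) auto
  also have "\<dots> \<le> (\<Prod>i<d. 2 * (real t + 1))"
  proof (intro prod_mono conjI)
    fix i
    show "0 \<le> (\<Sum>k\<in>{-int (d*t)..int (d*t)}. x ^ nat \<bar>k\<bar>)" using x0 by (intro sum_nonneg) auto
    have "(\<Sum>k\<in>{-int (d*t)..int (d*t)}. x ^ nat \<bar>k\<bar>) \<le> 2 * (\<Sum>n<Suc (d*t). x ^ n)"
      by (rule sym_sum_le) (use x0 in simp)
    also have "\<dots> \<le> 2 * (1 / (1 - x))" using geom_le[of x "Suc (d*t)"] x0 x1 by linarith
    also have "1 / (1 - x) = real t + 1" unfolding x_def by (simp add: field_simps)
    finally show "(\<Sum>k\<in>{-int (d*t)..int (d*t)}. x ^ nat \<bar>k\<bar>) \<le> 2 * (real t + 1)" by simp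
  qed
  also have "\<dots> = (2 * (real t + 1)) ^ d" by simp
  finally have A: "real (card S) * x ^ (d*t) \<le> (2 * (real t + 1)) ^ d" .
  have "(1 / x) ^ t = (1 + 1 / real t) ^ t" unfolding x_def using t by (simp add: field_simps)
  also have "\<dots> \<le> exp 1" using exp_ge_one_plus_x_over_n_power_n[where x=1 and n=t] t by auto
  also have "\<dots> \<le> 3" by (rule exp_le)
  finally have e: "(1 / x) ^ t \<le> 3" .
  have "real (card S) = real (card S) * x ^ (d*t) * ((1/x) ^ t) ^ d"
    using x0 by (simp add: power_mult power_one_over field_simps flip: power_mult)
  also have "\<dots> \<le> (2 * (real t + 1)) ^ d * 3 ^ d"
    using A e x0 by (intro mult_mono power_mono) auto
  also have "\<dots> = (6 * real t + 6) ^ d" by (simp add: power_mult_distrib[symmetric] algebra_simps)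
  finally show ?thesis unfolding S_def B_def .
qed



lemma floor_diff_bound: "\<bar>real_of_int (\<lfloor>a\<rfloor> - \<lfloor>b\<rfloor>)\<bar> \<le> \<bar>a - b\<bar> + 1"
proof -
  have "real_of_int \<lfloor>a\<rfloor> \<le> a" "a < real_of_int \<lfloor>a\<rfloor> + 1"
       "real_of_int \<lfloor>b\<rfloor> \<le> b" "b < real_of_int \<lfloor>b\<rfloor> + 1" by linarith+
  moreover have "a - b \<le> \<bar>a - b\<bar>" "b - a \<le> \<bar>a - b\<bar>" by auto
  ultimately show ?thesis unfolding abs_le_iff of_int_diff by linarith
qed

lemma density_nonneg: "has_density d \<rho> V obj \<Longrightarrow> 0 \<le> \<rho>"
proof -
  assume h: "has_density d \<rho> V obj"
  have "bounded_in d {}" by (simp add: bounded_in_def)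
  then have "real (card {v\<in>V. obj v \<inter> {} \<noteq> {} \<and> diam d (obj v) \<ge> diam d {}}) \<le> \<rho>"
    using h unfolding has_density_def by blast
  then show ?thesis by simp
qed

lemma density_apply: "has_density d \<rho> V obj \<Longrightarrow> bounded_in d Q \<Longrightarrow>
   real (card {v\<in>V. obj v \<inter> Q \<noteq> {} \<and> diam d (obj v) \<ge> diam d Q}) \<le> \<rho>"
  unfolding has_density_def by blast

lemma local_count:
  fixes R :: nat
  assumes d: "d \<ge> 1" and V: "finite V" and dens: "has_density d \<rho> V obj" and \<delta>: "0 \<le> \<delta>"
    and a: "a \<in> Rd d"
  shows "real (card {v\<in>V. \<delta> \<le> diam d (obj v) \<and> (\<exists>q\<in>obj v. edist d a q \<le> real R * \<delta>)})
          \<le> \<rho> * (6 * real (R+1) + 6) ^ d"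
proof -
  define Z where "Z = {v\<in>V. \<delta> \<le> diam d (obj v) \<and> (\<exists>q\<in>obj v. edist d a q \<le> real R * \<delta>)}"
  have \<rho>0: "0 \<le> \<rho>" using density_nonneg[OF dens] .
  have bo: "bounded_in d (obj v)" if "v \<in> V" for v using dens that unfolding has_density_def by blast
  have K1: "1 \<le> (6 * real (R+1) + 6) ^ d" by (rule one_le_power) simp
  show ?thesis
  proof (cases "\<delta> = 0")
    case True
    have dz: "diam d {a} = 0"
      using diam_le[of "{a}" d 0] diam_nonneg[of d "{a}"] a
      by (auto simp: edist_self bounded_in_def)
    have ba: "bounded_in d {a}" using a by (auto simp: bounded_in_def)
    have "Z \<subseteq> {v\<in>V. obj v \<inter> {a} \<noteq> {} \<and> diam d (obj v) \<ge> diam d {a}}"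
    proof
      fix v assume "v \<in> Z"
      then obtain q where q: "v \<in> V" "q \<in> obj v" "edist d a q \<le> 0" "0 \<le> diam d (obj v)"
        using True unfolding Z_def by auto
      have "q \<in> Rd d" using bo[OF q(1)] q(2) by (auto simp: bounded_in_def)
      then have "q = a" using edist_zero[OF a, of q] q(3) edist_nonneg[of d a q] by simp
      then show "v \<in> {v\<in>V. obj v \<inter> {a} \<noteq> {} \<and> diam d (obj v) \<ge> diam d {a}}" using q dz by auto
    qed
    moreover have "finite {v\<in>V. obj v \<inter> {a} \<noteq> {} \<and> diam d (obj v) \<ge> diam d {a}}" using V by simp
    ultimately have "card Z \<le> card {v\<in>V. obj v \<inter> {a} \<noteq> {} \<and> diam d (obj v) \<ge> diam d {a}}"
      by (intro card_mono)
    then have "real (card Z) \<le> \<rho>"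
      using density_apply[OF dens ba] by linarith
    also have "\<dots> \<le> \<rho> * (6 * real (R+1) + 6) ^ d" using \<rho>0 K1 by (simp add: mult_le_cancel_left1)
    finally show ?thesis unfolding Z_def .
  next
    case False
    then have \<delta>p: "0 < \<delta>" using \<delta> by simp
    define s where "s = \<delta> / sqrt (real d)"
    have sp: "0 < s" using \<delta>p d by (simp add: s_def)
    define idx where "idx = (\<lambda>q. restrict (\<lambda>i. \<lfloor>q i / s\<rfloor> - \<lfloor>a i / s\<rfloor>) {..<d})"
    define Cube where "Cube = (\<lambda>u. {x \<in> Rd d. \<forall>i<d. \<lfloor>x i / s\<rfloor> - \<lfloor>a i / s\<rfloor> = u i})"
    define Zc where "Zc = (\<lambda>u. {v\<in>V. obj v \<inter> Cube u \<noteq> {} \<and> diam d (obj v) \<ge> diam d (Cube u)})"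
    define W where "W = idx ` {q \<in> Rd d. edist d a q \<le> real R * \<delta>}"
    define S where "S = {u \<in> PiE {..<d} (\<lambda>_. {-int (d*(R+1))..int (d*(R+1))}). (\<Sum>i<d. \<bar>u i\<bar>) \<le> int (d*(R+1))}"
    have cube_edist: "edist d x y \<le> \<delta>" if "x \<in> Cube u" "y \<in> Cube u" for u x y
    proof -
      have "\<bar>x i - y i\<bar> \<le> s" if "i < d" for i
      proof -
        have "\<lfloor>x i / s\<rfloor> - \<lfloor>a i / s\<rfloor> = u i" using \<open>x \<in> Cube u\<close> that by (simp add: Cube_def)
        moreover have "\<lfloor>y i / s\<rfloor> - \<lfloor>a i / s\<rfloor> = u i" using \<open>y \<in> Cube u\<close> that by (simp add: Cube_def)
        ultimately have fe: "\<lfloor>x i / s\<rfloor> = \<lfloor>y i / s\<rfloor>" by simp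
        have "real_of_int \<lfloor>x i / s\<rfloor> \<le> x i / s" "x i / s < real_of_int \<lfloor>x i / s\<rfloor> + 1"
             "real_of_int \<lfloor>y i / s\<rfloor> \<le> y i / s" "y i / s < real_of_int \<lfloor>y i / s\<rfloor> + 1"
          by linarith+
        then have "\<bar>x i / s - y i / s\<bar> < 1" using fe by linarith
        then have "\<bar>x i - y i\<bar> / s < 1" using sp by (metis abs_divide abs_of_pos diff_divide_distrib)
        then show ?thesis using sp by (simp add: pos_divide_less_eq)
      qed
      then have "L2_set (\<lambda>i. \<bar>x i - y i\<bar>) {..<d} \<le> L2_set (\<lambda>i. s) {..<d}"
        by (intro L2_set_mono) auto
      also have "\<dots> = sqrt (real d) * s" using sp by (simp add: L2_set_constant)
      also have "\<dots> = \<delta>" using d by (simp add: s_def)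
      finally show ?thesis unfolding edist_def L2_set_def by simp
    qed
    have cube_b: "bounded_in d (Cube u)" for u
    proof -
      have "Cube u \<subseteq> Rd d" unfolding Cube_def by (rule Collect_subset[unfolded Collect_mem_eq])
      moreover have "\<forall>x\<in>Cube u. \<forall>y\<in>Cube u. edist d x y \<le> \<delta>" using cube_edist by simp
      ultimately show ?thesis unfolding bounded_in_def by blast
    qed
    have cube_diam: "diam d (Cube u) \<le> \<delta>" for u using cube_edist \<delta> by (intro diam_le) auto
    have Zc_le: "real (card (Zc u)) \<le> \<rho>" for u
      unfolding Zc_def by (rule density_apply[OF dens cube_b])
    have WS: "W \<subseteq> S"
    proof
      fix u assume "u \<in> W"
      then obtain q where q: "q \<in> Rd d" "edist d a q \<le> real R * \<delta>" and u: "u = idx q"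
        unfolding W_def by auto
      have b1: "real_of_int \<bar>u i\<bar> \<le> \<bar>q i - a i\<bar> / s + 1" if "i < d" for i
      proof -
        have "real_of_int \<bar>u i\<bar> = \<bar>real_of_int (\<lfloor>q i / s\<rfloor> - \<lfloor>a i / s\<rfloor>)\<bar>"
          using that unfolding u idx_def by simp
        also have "\<dots> \<le> \<bar>q i / s - a i / s\<bar> + 1" by (rule floor_diff_bound)
        also have "\<bar>q i / s - a i / s\<bar> = \<bar>q i - a i\<bar> / s" using sp
          by (metis abs_divide abs_of_pos diff_divide_distrib)
        finally show ?thesis .
      qed
      have "real_of_int (\<Sum>i<d. \<bar>u i\<bar>) = (\<Sum>i<d. real_of_int \<bar>u i\<bar>)" by simp
      also have "\<dots> \<le> (\<Sum>i<d. \<bar>q i - a i\<bar> / s + 1)" using b1 by (intro sum_mono) auto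
      also have "\<dots> = (\<Sum>i<d. \<bar>a i - q i\<bar>) / s + real d"
        by (simp add: sum.distrib sum_divide_distrib abs_minus_commute)
      also have "\<dots> \<le> sqrt (real d) * edist d a q / s + real d"
        using edist_l1[where d=d and x=a and y=q] sp by (simp add: divide_right_mono)
      also have "\<dots> \<le> sqrt (real d) * (real R * \<delta>) / s + real d"
        using q(2) sp by (simp add: divide_right_mono mult_left_mono)
      also have "sqrt (real d) * (real R * \<delta>) / s = real d * real R"
        using d \<delta>p by (simp add: s_def field_simps)
      also have "real d * real R + real d = real_of_int (int (d * (R+1)))" by (simp add: algebra_simps)
      finally have sum_le: "(\<Sum>i<d. \<bar>u i\<bar>) \<le> int (d*(R+1))" by linarith
      have "u \<in> PiE {..<d} (\<lambda>_. {-int (d*(R+1))..int (d*(R+1))})"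
      proof -
        have "\<bar>u i\<bar> \<le> (\<Sum>i<d. \<bar>u i\<bar>)" if "i < d" for i
          using that by (intro member_le_sum) auto
        then have "\<bar>u i\<bar> \<le> int (d*(R+1))" if "i < d" for i using sum_le that by fastforce
        then show ?thesis unfolding u idx_def by (force simp: PiE_def extensional_def abs_le_iff)
      qed
      then show "u \<in> S" using sum_le unfolding S_def by blast
    qed
    have finS: "finite S"
    proof (rule finite_subset)
      show "S \<subseteq> PiE {..<d} (\<lambda>_. {-int (d*(R+1))..int (d*(R+1))})" unfolding S_def by blast
      show "finite (PiE {..<d} (\<lambda>_. {-int (d*(R+1))..int (d*(R+1))}))" by (rule finite_PiE) auto
    qed
    have finW: "finite W" using finite_subset[OF WS finS] .
    have ZU: "Z \<subseteq> (\<Union>u\<in>W. Zc u)"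
    proof
      fix v assume "v \<in> Z"
      then obtain q where q: "v \<in> V" "q \<in> obj v" "edist d a q \<le> real R * \<delta>" "\<delta> \<le> diam d (obj v)"
        unfolding Z_def by auto
      have qR: "q \<in> Rd d" using bo[OF q(1)] q(2) by (auto simp: bounded_in_def)
      have "q \<in> Cube (idx q)" using qR unfolding Cube_def idx_def by auto
      moreover have "idx q \<in> W" using qR q(3) unfolding W_def by auto
      moreover have "v \<in> Zc (idx q)" unfolding Zc_def
        using q \<open>q \<in> Cube (idx q)\<close> cube_diam[of "idx q"] by auto
      ultimately show "v \<in> (\<Union>u\<in>W. Zc u)" by blast
    qed
    have "real (card Z) \<le> real (card (\<Union>u\<in>W. Zc u))"
      using ZU V finW by (intro of_nat_mono card_mono) (auto simp: Zc_def)
    also have "\<dots> \<le> real (\<Sum>u\<in>W. card (Zc u))" by (intro of_nat_mono card_UN_le finW)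
    also have "\<dots> = (\<Sum>u\<in>W. real (card (Zc u)))" by simp
    also have "\<dots> \<le> (\<Sum>u\<in>W. \<rho>)" using Zc_le by (intro sum_mono) auto
    also have "\<dots> = real (card W) * \<rho>" by simp
    also have "\<dots> \<le> real (card S) * \<rho>" using card_mono[OF finS WS] \<rho>0 by (intro mult_right_mono) auto
    also have "\<dots> \<le> (6 * real (R+1) + 6) ^ d * \<rho>"
      using lattice_count[of "R+1" d] \<rho>0 unfolding S_def by (intro mult_right_mono) auto
    finally show ?thesis unfolding Z_def by (simp add: mult.commute)
  qed
qed



lemma walk_join:
  assumes "walk obj g1 k1" "walk obj g2 k2" "g1 0 = g2 0"
  shows "walk obj (\<lambda>i. if i \<le> k1 then g1 (k1 - i) else g2 (i - k1)) (k1 + k2)"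
  unfolding walk_def
proof (intro allI impI)
  fix i assume i: "i < k1 + k2"
  show "obj (if i \<le> k1 then g1 (k1 - i) else g2 (i - k1)) \<inter>
        obj (if Suc i \<le> k1 then g1 (k1 - Suc i) else g2 (Suc i - k1)) \<noteq> {}"
  proof (cases "i < k1")
    case True
    then have "obj (g1 (k1 - Suc i)) \<inter> obj (g1 (Suc (k1 - Suc i))) \<noteq> {}"
      using assms(1) unfolding walk_def by simp
    moreover have "Suc (k1 - Suc i) = k1 - i" using True by simp
    ultimately show ?thesis using True by (auto simp: Int_commute)
  next
    case False
    then have h1: "(if i \<le> k1 then g1 (k1 - i) else g2 (i - k1)) = g2 (i - k1)"
      using assms(3) by (cases "i = k1") auto
    have h2: "(if Suc i \<le> k1 then g1 (k1 - Suc i) else g2 (Suc i - k1)) = g2 (Suc (i - k1))"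
      using False by (simp add: Suc_diff_le)
    have "i - k1 < k2" using i False by simp
    then show ?thesis unfolding h1 h2 using assms(2) unfolding walk_def by simp
  qed
qed

lemma final_bound: "(18 * real r + 18) ^ d \<le> (real r + 2) powr (5 * real d)"
proof -
  have "(2::real)^3 \<le> (real r + 2)^3" by (intro power_mono) auto
  then have "(real r + 2)^2 * 8 \<le> (real r + 2)^2 * (real r + 2)^3" by (intro mult_left_mono) auto
  also have "(real r + 2)^2 * (real r + 2)^3 = (real r + 2)^5" by (simp flip: power_add)
  finally have A: "(real r + 2)^2 * 8 \<le> (real r + 2)^5" .
  have "18 * real r + 18 \<le> (real r + 2)^2 * 8" by (simp add: power2_eq_square algebra_simps)
  with A have "18 * real r + 18 \<le> (real r + 2)^5" by linarith
  then have "(18 * real r + 18) ^ d \<le> ((real r + 2)^5) ^ d" by (intro power_mono) auto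
  also have "\<dots> = (real r + 2) ^ (5 * d)" by (simp add: power_mult)
  also have "\<dots> = (real r + 2) powr (real (5 * d))" by (rule powr_realpow[symmetric]) simp
  finally show ?thesis by simp
qed

theorem mainTheorem10:
  "\<exists>C>0. \<forall>(d::nat) (\<rho>::real) (V::nat set) (obj::nat \<Rightarrow> (nat \<Rightarrow> real) set) (r::nat) P M.
     d \<ge> 1 \<longrightarrow> \<rho> > 0 \<longrightarrow> finite V \<longrightarrow> has_density d \<rho> V obj \<longrightarrow>
     shallow_minor r V (inter_graph obj) P M \<longrightarrow> P \<noteq> {} \<longrightarrow>
     real (card M) / real (card P) \<le> \<rho> * (real r + 2) powr (C * real d)"
proof (intro exI[of _ 5] conjI allI impI)
  fix d :: nat and \<rho> :: real and V :: "nat set" and obj :: "nat \<Rightarrow> (nat \<Rightarrow> real) set" and r :: nat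
    and P M
  assume d: "d \<ge> 1" and \<rho>: "\<rho> > 0" and V: "finite V" and dens: "has_density d \<rho> V obj"
    and sm: "shallow_minor r V (inter_graph obj) P M" and Pne: "P \<noteq> {}"
  define E where "E = inter_graph obj"
  have SM: "(\<forall>X\<in>P. X \<subseteq> V \<and> shallow r E X) \<and> (\<forall>X\<in>P. \<forall>Y\<in>P. X \<noteq> Y \<longrightarrow> X \<inter> Y = {}) \<and>
     (\<forall>e\<in>M. \<exists>X\<in>P. \<exists>Y\<in>P. X \<noteq> Y \<and> e = {X, Y} \<and> (\<exists>u\<in>X. \<exists>w\<in>Y. E u w))"
    using sm unfolding shallow_minor_def E_def .
  have PV: "X \<subseteq> V" if "X \<in> P" for X using SM that by simp
  have Psh: "shallow r E X" if "X \<in> P" for X using SM that by simp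
  have Pdisj: "X \<inter> Y = {}" if "X \<in> P" "Y \<in> P" "X \<noteq> Y" for X Y using SM that by simp
  have Medge: "\<exists>X\<in>P. \<exists>Y\<in>P. X \<noteq> Y \<and> e = {X, Y} \<and> (\<exists>u\<in>X. \<exists>w\<in>Y. E u w)" if "e \<in> M" for e
    using SM that by simp
  have finP: "finite P" by (rule finite_subset[of P "Pow V"]) (use PV V in auto)
  have finX: "finite X" if "X \<in> P" for X by (rule finite_subset[OF PV[OF that] V])
  have neX: "X \<noteq> {}" if "X \<in> P" for X using Psh[OF that] unfolding shallow_def by auto
  have bo0: "\<forall>v\<in>V. bounded_in d (obj v)" using dens unfolding has_density_def by (rule conjunct1)
  have bo: "bounded_in d (obj v)" if "v \<in> V" for v using bo0 that by simp
  have \<rho>0: "0 \<le> \<rho>" using \<rho> by simp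
  define Dm where "Dm = (\<lambda>X. Max ((\<lambda>v. diam d (obj v)) ` X))"
  have Dm_ge: "diam d (obj v) \<le> Dm X" if "X \<in> P" "v \<in> X" for X v
    unfolding Dm_def using finX[OF that(1)] that(2) by (intro Max_ge) auto
  have Dm_in: "\<exists>v\<in>X. diam d (obj v) = Dm X" if "X \<in> P" for X
  proof -
    have "Dm X \<in> (\<lambda>v. diam d (obj v)) ` X" unfolding Dm_def
      using finX[OF that] neX[OF that] by (intro Max_in) auto
    then show ?thesis by auto
  qed
  have Dm0: "0 \<le> Dm X" if XP0: "X \<in> P" for X
  proof -
    obtain v where "v \<in> X" using neX[OF XP0] by blast
    then have "v \<in> V" using PV[OF XP0] by blast
    then have "0 \<le> diam d (obj v)" by (rule diam_nonneg[OF bo])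
    then show ?thesis using Dm_ge[OF XP0 \<open>v \<in> X\<close>] by linarith
  qed
  define K :: real where "K = (6 * real (3*r+1+1) + 6) ^ d"
  define N where "N = (\<lambda>X. {Y\<in>P. Y \<noteq> X \<and> Dm X \<le> Dm Y \<and> (\<exists>u\<in>X. \<exists>w\<in>Y. E u w)})"
  have Esym: "E u w \<Longrightarrow> E w u" for u w unfolding E_def inter_graph_def by auto
  have Nbound: "real (card (N X)) \<le> \<rho> * K" if XP: "X \<in> P" for X
  proof (cases "N X = {}")
    case True then show ?thesis using \<rho>0 by (simp add: K_def)
  next
    case False
    obtain c where c: "c \<in> X" and cw: "\<forall>v\<in>X. \<exists>f k. k \<le> r \<and> walk obj f k \<and> f 0 = c \<and> f k = v \<and> (\<forall>i\<le>k. f i \<in> X)"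
      using shallow_walk[OF Psh[OF XP, unfolded E_def]] by blast
    obtain Y0 u0 w0 where "u0 \<in> X" "E u0 w0" using False unfolding N_def by blast
    then have ou0: "obj u0 \<noteq> {}" unfolding E_def inter_graph_def by auto
    obtain f k where f: "k \<le> r" "walk obj f k" "f 0 = c" "f k = u0"
      using cw \<open>u0 \<in> X\<close> by blast
    have "obj c \<noteq> {}"
    proof (cases k)
      case 0 then show ?thesis using f ou0 by simp
    next
      case (Suc k') then show ?thesis using f(2,3) unfolding walk_def by auto
    qed
    then obtain a where a: "a \<in> obj c" by blast
    have cV: "c \<in> V" using PV[OF XP] c by blast
    have aR: "a \<in> Rd d" using bo[OF cV] a unfolding bounded_in_def by blast
    have claim: "\<exists>z\<in>Y. Dm X \<le> diam d (obj z) \<and> (\<exists>q\<in>obj z. edist d a q \<le> real (3*r+1) * Dm X)"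
      if YN: "Y \<in> N X" for Y
    proof -
      from YN have YP: "Y \<in> P" and DXY: "Dm X \<le> Dm Y" and uw: "\<exists>u\<in>X. \<exists>w\<in>Y. E u w"
        unfolding N_def by auto
      obtain u w where uw: "u \<in> X" "w \<in> Y" "E u w" using uw by blast
      obtain p where p: "p \<in> obj u" "p \<in> obj w" using uw(3) unfolding E_def inter_graph_def by blast
      obtain f1 k1 where f1: "k1 \<le> r" "walk obj f1 k1" "f1 0 = c" "f1 k1 = u" "\<forall>i\<le>k1. f1 i \<in> X"
        using cw uw(1) by blast
      have "edist d a p \<le> (real k1 + 1) * Dm X"
      proof (rule walk_small[OF f1(2)])
        show "\<forall>i\<le>k1. bounded_in d (obj (f1 i)) \<and> diam d (obj (f1 i)) \<le> Dm X"
        proof (intro allI impI conjI)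
          fix i assume "i \<le> k1"
          then have fi: "f1 i \<in> X" using f1(5) by simp
          then show "diam d (obj (f1 i)) \<le> Dm X" by (rule Dm_ge[OF XP])
          have "f1 i \<in> V" using fi PV[OF XP] by (rule subsetD[rotated])
          then show "bounded_in d (obj (f1 i))" by (rule bo)
        qed
      qed (use a p f1 in auto)
      also have "\<dots> \<le> (real r + 1) * Dm X" using f1(1) Dm0[OF XP] by (intro mult_right_mono) auto
      finally have ap: "edist d a p \<le> (real r + 1) * Dm X" .
      obtain cY where cY: "cY \<in> Y" and cYw: "\<forall>v\<in>Y. \<exists>f k. k \<le> r \<and> walk obj f k \<and> f 0 = cY \<and> f k = v \<and> (\<forall>i\<le>k. f i \<in> Y)"
        using shallow_walk[OF Psh[OF YP, unfolded E_def]] by blast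
      obtain ym where ym: "ym \<in> Y" "diam d (obj ym) = Dm Y" using Dm_in[OF YP] by blast
      obtain g1 k2 where g1: "k2 \<le> r" "walk obj g1 k2" "g1 0 = cY" "g1 k2 = w" "\<forall>i\<le>k2. g1 i \<in> Y"
        using cYw uw(2) by blast
      obtain g2 k3 where g2: "k3 \<le> r" "walk obj g2 k3" "g2 0 = cY" "g2 k3 = ym" "\<forall>i\<le>k3. g2 i \<in> Y"
        using cYw ym(1) by blast
      define h where "h = (\<lambda>i. if i \<le> k2 then g1 (k2 - i) else g2 (i - k2))"
      have hw: "walk obj h (k2 + k3)" unfolding h_def by (rule walk_join[OF g1(2) g2(2)]) (simp add: g1 g2)
      have hY: "\<forall>i\<le>k2+k3. h i \<in> Y" unfolding h_def using g1(5) g2(5) by auto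
      have h0: "h 0 = w" unfolding h_def using g1(4) by simp
      have hk: "h (k2 + k3) = ym" unfolding h_def using g2(4) g1(3) g2(3) by (cases k3) auto
      have YV: "Y \<subseteq> V" using PV[OF YP] .
      obtain j q where j: "j \<le> k2 + k3" "Dm X \<le> diam d (obj (h j))" "q \<in> obj (h j)"
          "edist d p q \<le> real j * Dm X"
      proof -
        have "\<exists>j\<le>k2+k3. Dm X \<le> diam d (obj (h j)) \<and> (\<exists>q\<in>obj (h j). edist d p q \<le> real j * Dm X)"
        proof (rule walk_big[OF hw])
          show "\<forall>i\<le>k2 + k3. bounded_in d (obj (h i))"
          proof (intro allI impI)
            fix i assume "i \<le> k2 + k3"
            then have "h i \<in> Y" using hY by simp
            then have "h i \<in> V" using YV by (rule subsetD[rotated])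
            then show "bounded_in d (obj (h i))" by (rule bo)
          qed
          show "Dm X \<le> diam d (obj (h (k2 + k3)))" using hk ym DXY by simp
          show "p \<in> obj (h 0)" using h0 p by simp
        qed
        then show ?thesis using that by blast
      qed
      have "real j * Dm X \<le> real (2*r) * Dm X" using j(1) g1(1) g2(1) Dm0[OF XP]
        by (intro mult_right_mono) auto
      then have "edist d a q \<le> real (3*r+1) * Dm X"
        using edist_tri[of d a q p] ap j(4) by (simp add: algebra_simps)
      then show ?thesis using j hY by blast
    qed
    define Z where "Z = {v\<in>V. Dm X \<le> diam d (obj v) \<and> (\<exists>q\<in>obj v. edist d a q \<le> real (3*r+1) * Dm X)}"
    define g where "g = (\<lambda>Y. SOME z. z \<in> Y \<and> Dm X \<le> diam d (obj z) \<and> (\<exists>q\<in>obj z. edist d a q \<le> real (3*r+1) * Dm X))"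
    have g: "g Y \<in> Y \<and> Dm X \<le> diam d (obj (g Y)) \<and> (\<exists>q\<in>obj (g Y). edist d a q \<le> real (3*r+1) * Dm X)"
      if "Y \<in> N X" for Y
      unfolding g_def by (rule someI_ex) (use claim[OF that] in blast)
    have NP: "N X \<subseteq> P" unfolding N_def by blast
    have inj: "inj_on g (N X)"
    proof (rule inj_onI)
      fix Y1 Y2 assume "Y1 \<in> N X" "Y2 \<in> N X" "g Y1 = g Y2"
      then have "g Y1 \<in> Y1" "g Y1 \<in> Y2" using g by metis+
      moreover have "Y1 \<in> P" "Y2 \<in> P" using \<open>Y1 \<in> N X\<close> \<open>Y2 \<in> N X\<close> NP by auto
      ultimately show "Y1 = Y2" using Pdisj by blast
    qed
    have gZ: "g ` N X \<subseteq> Z"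
    proof
      fix z assume "z \<in> g ` N X"
      then obtain Y where Y: "Y \<in> N X" "z = g Y" by blast
      have "z \<in> Y" using g[OF Y(1)] Y(2) by simp
      moreover have "Y \<subseteq> V" using Y(1) NP PV by blast
      ultimately have "z \<in> V" by blast
      then show "z \<in> Z" unfolding Z_def using g[OF Y(1)] Y(2) by simp
    qed
    have "card (N X) = card (g ` N X)" using card_image[OF inj] by simp
    also have "\<dots> \<le> card Z" using gZ V unfolding Z_def by (intro card_mono) auto
    finally have "real (card (N X)) \<le> real (card Z)" by simp
    also have "\<dots> \<le> \<rho> * K" unfolding Z_def K_def
      by (rule local_count[OF d V dens Dm0[OF XP] aR])
    finally show ?thesis .
  qed
  have MU: "M \<subseteq> (\<Union>X\<in>P. (\<lambda>Y. {X, Y}) ` N X)"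
  proof
    fix e assume "e \<in> M"
    then obtain X Y u w where XY: "X \<in> P" "Y \<in> P" "X \<noteq> Y" "e = {X, Y}" "u \<in> X" "w \<in> Y" "E u w"
      using Medge by blast
    show "e \<in> (\<Union>X\<in>P. (\<lambda>Y. {X, Y}) ` N X)"
    proof (cases "Dm X \<le> Dm Y")
      case True
      then have "Y \<in> N X" unfolding N_def using XY by blast
      then show ?thesis using XY by blast
    next
      case False
      then have "X \<in> N Y" unfolding N_def using XY Esym by fastforce
      moreover have "e = {Y, X}" using XY by blast
      ultimately show ?thesis using XY by blast
    qed
  qed
  have finN: "finite (N X)" if "X \<in> P" for X using finP unfolding N_def by simp
  have "card M \<le> card (\<Union>X\<in>P. (\<lambda>Y. {X, Y}) ` N X)"
    using MU finP finN by (intro card_mono) auto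
  also have "\<dots> \<le> (\<Sum>X\<in>P. card ((\<lambda>Y. {X, Y}) ` N X))" by (rule card_UN_le[OF finP])
  also have "\<dots> \<le> (\<Sum>X\<in>P. card (N X))" by (intro sum_mono card_image_le finN)
  finally have "real (card M) \<le> (\<Sum>X\<in>P. real (card (N X)))" by (simp flip: of_nat_sum)
  also have "\<dots> \<le> (\<Sum>X\<in>P. \<rho> * K)" using Nbound by (intro sum_mono) auto
  also have "\<dots> = real (card P) * (\<rho> * K)" by simp
  finally have cM: "real (card M) \<le> real (card P) * (\<rho> * K)" .
  have cP: "0 < real (card P)" using finP Pne by (simp add: card_gt_0_iff)
  have "real (card M) / real (card P) \<le> \<rho> * K" using cM cP by (simp add: divide_le_eq mult.commute)
  also have "K = (18 * real r + 18) ^ d" unfolding K_def by (simp add: algebra_simps)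
  also have "\<rho> * \<dots> \<le> \<rho> * (real r + 2) powr (5 * real d)"
    using final_bound \<rho>0 by (intro mult_left_mono) auto
  finally show "real (card M) / real (card P) \<le> \<rho> * (real r + 2) powr (5 * real d)" .
qed simp


end
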